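(* The convex Vietoris functor $\mathbb{V}^{\mathrm{c}}\colon\mathbf{CompOrd}\to\mathbf{CompOrd}$ preserves regular monomorphisms; equivalently, if $f\colon X\to Y$ is an order-reflecting morphism of compact ordered spaces (i.e. $f(x)\le f(y)$ implies $x\le y$), then $\mathbb{V}^{\mathrm{c}}f$ is order-reflecting with respect to the Egli–Milner orders.
   Context: $\mathbf{CompOrd}$ is the category of compact ordered spaces (compact Hausdorff spaces with a partial order closed in $X\times X$) and continuous order-preserving maps; its regular monomorphisms are exactly the order-reflecting morphisms. For a subset $Y$ of a poset, $\uparrow Y$, $\downarrow Y$ are up- and down-closure; $Y$ is convex if $y_1\le x\le y_2$ with $y_1,y_2\in Y$ implies $x\in Y$; $\updownarrow Y=\uparrow Y\cap\downarrow Y$. $\mathbb{V}^{\mathrm{c}}X$ is the set of closed convex subsets of $X$ with the topology generated by $\Diamond U=\{K\mid K\cap U\neq\varnothing\}$ and $\Box U=\{K\mid K\subseteq U\}$ ($U$ open upset or open downset of $X$) and the Egli–Milner order $K\le_{\mathrm{EM}}L$ iff $\uparrow L\subseteq\uparrow K$ and $\downarrow K\subseteq\downarrow L$; $\mathbb{V}^{\mathrm{c}}f(K)=\updownarrow f[K]$. *)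

theory Defs
  imports "HOL-Analysis.Analysis"
begin

definition compord :: "'a topology \<Rightarrow> ('a \<Rightarrow> 'a \<Rightarrow> bool) \<Rightarrow> bool" where
  "compord X le \<longleftrightarrow>
     compact_space X \<and> Hausdorff_space X \<and>
     (\<forall>x\<in>topspace X. le x x) \<and>
     (\<forall>x\<in>topspace X. \<forall>y\<in>topspace X. le x y \<and> le y x \<longrightarrow> x = y) \<and>
     (\<forall>x\<in>topspace X. \<forall>y\<in>topspace X. \<forall>z\<in>topspace X. le x y \<and> le y z \<longrightarrow> le x z) \<and>
     closedin (prod_topology X X) {(x, y). x \<in> topspace X \<and> y \<in> topspace X \<and> le x y}"

definition compord_morphism ::
  "'a topology \<Rightarrow> ('a \<Rightarrow> 'a \<Rightarrow> bool) \<Rightarrow> 'b topology \<Rightarrow> ('b \<Rightarrow> 'b \<Rightarrow> bool) \<Rightarrow> ('a \<Rightarrow> 'b) \<Rightarrow> bool" where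
  "compord_morphism X le Y le' f \<longleftrightarrow>
     continuous_map X Y f \<and>
     (\<forall>x\<in>topspace X. \<forall>y\<in>topspace X. le x y \<longrightarrow> le' (f x) (f y))"

definition order_reflecting ::
  "'a set \<Rightarrow> ('a \<Rightarrow> 'a \<Rightarrow> bool) \<Rightarrow> ('b \<Rightarrow> 'b \<Rightarrow> bool) \<Rightarrow> ('a \<Rightarrow> 'b) \<Rightarrow> bool" where
  "order_reflecting S le le' f \<longleftrightarrow> (\<forall>x\<in>S. \<forall>y\<in>S. le' (f x) (f y) \<longrightarrow> le x y)"

definition upset :: "'a set \<Rightarrow> ('a \<Rightarrow> 'a \<Rightarrow> bool) \<Rightarrow> 'a set \<Rightarrow> 'a set" where
  "upset S le A = {x\<in>S. \<exists>a\<in>A. le a x}"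

definition downset :: "'a set \<Rightarrow> ('a \<Rightarrow> 'a \<Rightarrow> bool) \<Rightarrow> 'a set \<Rightarrow> 'a set" where
  "downset S le A = {x\<in>S. \<exists>a\<in>A. le x a}"

definition updownset :: "'a set \<Rightarrow> ('a \<Rightarrow> 'a \<Rightarrow> bool) \<Rightarrow> 'a set \<Rightarrow> 'a set" where
  "updownset S le A = upset S le A \<inter> downset S le A"

definition order_convex :: "'a set \<Rightarrow> ('a \<Rightarrow> 'a \<Rightarrow> bool) \<Rightarrow> 'a set \<Rightarrow> bool" where
  "order_convex S le A \<longleftrightarrow>
     (\<forall>y1\<in>A. \<forall>y2\<in>A. \<forall>x\<in>S. le y1 x \<and> le x y2 \<longrightarrow> x \<in> A)"

definition Vc_carrier :: "'a topology \<Rightarrow> ('a \<Rightarrow> 'a \<Rightarrow> bool) \<Rightarrow> 'a set set" where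
  "Vc_carrier X le = {K. closedin X K \<and> order_convex (topspace X) le K}"

definition EM_le :: "'a set \<Rightarrow> ('a \<Rightarrow> 'a \<Rightarrow> bool) \<Rightarrow> 'a set \<Rightarrow> 'a set \<Rightarrow> bool" where
  "EM_le S le K L \<longleftrightarrow> upset S le L \<subseteq> upset S le K \<and> downset S le K \<subseteq> downset S le L"

definition Vc_map :: "'b topology \<Rightarrow> ('b \<Rightarrow> 'b \<Rightarrow> bool) \<Rightarrow> ('a \<Rightarrow> 'b) \<Rightarrow> 'a set \<Rightarrow> 'b set" where
  "Vc_map Y le' f K = updownset (topspace Y) le' (f ` K)"

end

theory Submission
  imports Defs
begin

theorem lemma3p18:
  fixes X :: "'a topology" and Y :: "'b topology"
    and le :: "'a \<Rightarrow> 'a \<Rightarrow> bool" and le' :: "'b \<Rightarrow> 'b \<Rightarrow> bool" and f :: "'a \<Rightarrow> 'b"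
  assumes "compord X le" and "compord Y le'"
    and "compord_morphism X le Y le' f"
    and "order_reflecting (topspace X) le le' f"
  shows "order_reflecting (Vc_carrier X le) (EM_le (topspace X) le) (EM_le (topspace Y) le')
           (Vc_map Y le' f)"
proof -
  have cont: "continuous_map X Y f" and mono: "\<And>x y. x \<in> topspace X \<Longrightarrow> y \<in> topspace X \<Longrightarrow> le x y \<Longrightarrow> le' (f x) (f y)"
    using assms(3) unfolding compord_morphism_def by auto
  have fX: "\<And>x. x \<in> topspace X \<Longrightarrow> f x \<in> topspace Y"
    using cont by (simp add: continuous_map_def Pi_iff)
  have refl: "\<And>y. y \<in> topspace Y \<Longrightarrow> le' y y"
    and trans: "\<And>x y z. x \<in> topspace Y \<Longrightarrow> y \<in> topspace Y \<Longrightarrow> z \<in> topspace Y \<Longrightarrow> le' x y \<Longrightarrow> le' y z \<Longrightarrow> le' x z"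
    using assms(2) unfolding compord_def by blast+
  have refl_: "\<And>x y. x \<in> topspace X \<Longrightarrow> y \<in> topspace X \<Longrightarrow> le' (f x) (f y) \<Longrightarrow> le x y"
    using assms(4) unfolding order_reflecting_def by blast
  show ?thesis unfolding order_reflecting_def
  proof (intro ballI impI)
    fix K L assume K: "K \<in> Vc_carrier X le" and L: "L \<in> Vc_carrier X le"
      and h: "EM_le (topspace Y) le' (Vc_map Y le' f K) (Vc_map Y le' f L)"
    have KX: "K \<subseteq> topspace X" and LX: "L \<subseteq> topspace X"
      using K L unfolding Vc_carrier_def by (auto dest: closedin_subset)
    have inV: "\<And>A a. A \<subseteq> topspace X \<Longrightarrow> a \<in> A \<Longrightarrow> f a \<in> Vc_map Y le' f A"
      unfolding Vc_map_def updownset_def upset_def downset_def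
      using fX refl by blast
    have h1: "upset (topspace Y) le' (Vc_map Y le' f L) \<subseteq> upset (topspace Y) le' (Vc_map Y le' f K)"
      and h2: "downset (topspace Y) le' (Vc_map Y le' f K) \<subseteq> downset (topspace Y) le' (Vc_map Y le' f L)"
      using h unfolding EM_le_def by auto
    have "upset (topspace X) le L \<subseteq> upset (topspace X) le K"
    proof
      fix x assume "x \<in> upset (topspace X) le L"
      then obtain l where x: "x \<in> topspace X" and l: "l \<in> L" "le l x" unfolding upset_def by auto
      have "f x \<in> upset (topspace Y) le' (Vc_map Y le' f L)"
        unfolding upset_def using x l LX fX mono inV[OF LX l(1)] by blast
      with h1 obtain z where z: "z \<in> Vc_map Y le' f K" "le' z (f x)" unfolding upset_def by blast
      then obtain k where k: "k \<in> K" "le' (f k) z" "z \<in> topspace Y"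
        unfolding Vc_map_def updownset_def upset_def by auto
      have "le' (f k) (f x)" using trans[OF fX[of k] k(3) fX[OF x] k(2) z(2)] k KX by auto
      then have "le k x" using refl_ k KX x by auto
      then show "x \<in> upset (topspace X) le K" unfolding upset_def using x k by auto
    qed
    moreover have "downset (topspace X) le K \<subseteq> downset (topspace X) le L"
    proof
      fix x assume "x \<in> downset (topspace X) le K"
      then obtain k where x: "x \<in> topspace X" and k: "k \<in> K" "le x k" unfolding downset_def by auto
      have "f x \<in> downset (topspace Y) le' (Vc_map Y le' f K)"
        unfolding downset_def using x k KX fX mono inV[OF KX k(1)] by blast
      with h2 obtain z where z: "z \<in> Vc_map Y le' f L" "le' (f x) z" unfolding downset_def by blast
      then obtain l where l: "l \<in> L" "le' z (f l)" "z \<in> topspace Y"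
        unfolding Vc_map_def updownset_def downset_def by auto
      have "le' (f x) (f l)" using trans[OF fX[OF x] l(3) fX[of l] z(2) l(2)] l LX by auto
      then have "le x l" using refl_ l LX x by auto
      then show "x \<in> downset (topspace X) le L" unfolding downset_def using x l by auto
    qed
    ultimately show "EM_le (topspace X) le K L" unfolding EM_le_def by auto
  qed
qed

end
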